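(* Let $I=\langle Q,D,\tau_{in},\tau_{out}\rangle$ be an instance of DTP where $Q$ is nonrecursive, connected, and contains no rigid atoms. Then DTP holds for $I$ if and only if for every tuple $\vec o$ over $C_I$, $\vec o\in Q(D\cup B_I,\tau_{out})$ implies $\vec o\in Q(D,\tau_{out})$, where $B_I$ is the bounded critical update of $I$.
   Context: Temporal Datalog. Constants are partitioned into objects and integer time points; variables into object variables and time variables. A time term is a time point, a time variable, or an expression $t+k$ with $t$ a time variable and $k\in\mathbb{Z}$. Each predicate is either extensional (EDB) or intensional (IDB) and has an arity $n\ge0$, each position being of object sort or time sort; a predicate is rigid if all its positions are of object sort, and temporal if its last position is of time sort and all others are of object sort. An atom $P(t_1,\dots,t_n)$ has terms of the required sorts. A rule is $\bigwedge_i\alpha_i\to\alpha$ with $\alpha$ and all $\alpha_i$ rigid or temporal atoms, $\alpha$ IDB whenever the body is nonempty, and every head variable occurring in the body. A program is a finite set of rules. A fact is a ground rigid or temporal atom without $+$ (identified with the rule $\top\to\alpha$); a dataset is a finite set of EDB facts. Rules are read as universally quantified first-order sentences with $+$ interpreted as integer addition; $\Pi\models\alpha$ denotes entailment. A query is $Q=\langle P_Q,\Pi_Q\rangle$ with $\Pi_Q$ a program and $P_Q$ an IDB predicate of $\Pi_Q$; it is temporal if $P_Q$ is temporal. For a temporal query $Q$, dataset $D$ and time point $\tau$, $Q(D,\tau)$ is the set of tuples of objects $\vec o$ with $\Pi_Q\cup D\models P_Q(\vec o,\tau)$. A $\tau_{in}$-history is a dataset consisting of rigid facts and temporal facts with time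 argument $\le\tau_{in}$; a $\tau_{in}$-update is a dataset consisting of temporal facts with time argument $>\tau_{in}$. Definitive Time Point (DTP): an instance is $\langle Q,D,\tau_{in},\tau_{out}\rangle$ with $Q$ a temporal query, $D$ a $\tau_{in}$-history and $\tau_{out}\le\tau_{in}$; DTP holds for it iff $Q(D,\tau_{out})=Q(D\cup U,\tau_{out})$ for every $\tau_{in}$-update $U$. Critical domain: $C_I$ is the set of all objects occurring in $\Pi_Q\cup D$ together with one fresh object $o_I$. Predicate $P$ depends on $P'$ in $\Pi$ if some rule of $\Pi$ has $P$ in the head and $P'$ in the body; $\Pi$ (or a query with program $\Pi$) is nonrecursive if the graph of this dependency relation is acyclic. A rule is connected if it contains at most one time variable and, if a time variable occurs in the body, it also occurs in the head; a query is connected if all its rules are. For a time term $s$, $\Delta(s)=k$ if $s=t+k$ with $t$ a variable, and $\Delta(s)=0$ otherwise. The radius of a connected rule $r$ mentioning a time variable is the maximum of $|\Delta(s)-\Delta(s')|$ where $s$ is the time argument of the head and $s'$ the time argument of a body atom of $r$. The radius $\mathrm{rad}(\Pi)$ of a connected program is the number of rules of $\Pi$ times the maximum radius of a rule of $\Pi$. Bounded critical update: let $\tau_0$ be the maximum of $\tau_{out}$ and the largest time point occurring in $\Pi_Q$; a time point $\tau$ is critical for $I$ if $\tau_{in}<\tau\le\tau_0+\mathrm{rad}(\Pi_Q)$; $B_I$ consists of all facts $P(\vec o,\tau)$ with $P$ a temporal EDB predicate of $\Pi_Q$, $\vec o$ a tuple over $C_I$ and $\tau$ critical. *)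

theory Defs
  imports Main
begin

text \<open>Objects are represented by natural numbers, time points by integers.
Object variables and time variables are indexed by natural numbers (separate namespaces).\<close>

datatype oterm = OConst nat | OVar nat

text \<open>Time terms: a time point, or TVar v k standing for t_v + k (plain variable t_v is TVar v 0).\<close>
datatype tterm = TPt int | TVar nat int

text \<open>Kind of a predicate: rigid with n object positions, or temporal with n object
positions followed by one time position. (Predicates of other sort patterns can never
occur in rules or facts, so they are omitted.)\<close>
datatype pkind = Rigid nat | Temporal nat

record 'p signature =
  is_edb :: "'p \<Rightarrow> bool"
  kind :: "'p \<Rightarrow> pkind"

datatype 'p atom = Atom 'p "oterm list" "tterm option"
datatype 'p rule = Rule "'p atom list" "'p atom"
datatype 'p fact = Fact 'p "nat list" "int option"

fun atom_pred :: "'p atom \<Rightarrow> 'p" where "atom_pred (Atom p _ _) = p"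
fun atom_objs :: "'p atom \<Rightarrow> oterm list" where "atom_objs (Atom _ os _) = os"
fun atom_time :: "'p atom \<Rightarrow> tterm option" where "atom_time (Atom _ _ t) = t"

fun body :: "'p rule \<Rightarrow> 'p atom list" where "body (Rule b h) = b"
fun head :: "'p rule \<Rightarrow> 'p atom" where "head (Rule b h) = h"

fun fact_pred :: "'p fact \<Rightarrow> 'p" where "fact_pred (Fact p _ _) = p"
fun fact_objs :: "'p fact \<Rightarrow> nat list" where "fact_objs (Fact _ os _) = os"
fun fact_time :: "'p fact \<Rightarrow> int option" where "fact_time (Fact _ _ t) = t"

definition is_temporal :: "'p signature \<Rightarrow> 'p \<Rightarrow> bool" where
  "is_temporal S p = (\<exists>n. kind S p = Temporal n)"

fun wf_atom :: "'p signature \<Rightarrow> 'p atom \<Rightarrow> bool" where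
  "wf_atom S (Atom p os t) =
     (case kind S p of Rigid n \<Rightarrow> length os = n \<and> t = None
                     | Temporal n \<Rightarrow> length os = n \<and> t \<noteq> None)"

fun wf_fact :: "'p signature \<Rightarrow> 'p fact \<Rightarrow> bool" where
  "wf_fact S (Fact p os t) =
     (case kind S p of Rigid n \<Rightarrow> length os = n \<and> t = None
                     | Temporal n \<Rightarrow> length os = n \<and> t \<noteq> None)"

fun tvars_tterm :: "tterm \<Rightarrow> nat set" where
  "tvars_tterm (TPt _) = {}"
| "tvars_tterm (TVar v _) = {v}"

definition ovars_atom :: "'p atom \<Rightarrow> nat set" where
  "ovars_atom a = {v. OVar v \<in> set (atom_objs a)}"

definition tvars_atom :: "'p atom \<Rightarrow> nat set" where
  "tvars_atom a = (case atom_time a of None \<Rightarrow> {} | Some s \<Rightarrow> tvars_tterm s)"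

definition atoms_rule :: "'p rule \<Rightarrow> 'p atom set" where
  "atoms_rule r = insert (head r) (set (body r))"

definition atoms_prog :: "'p rule set \<Rightarrow> 'p atom set" where
  "atoms_prog P = (\<Union>r\<in>P. atoms_rule r)"

definition preds_prog :: "'p rule set \<Rightarrow> 'p set" where
  "preds_prog P = atom_pred ` atoms_prog P"

definition wf_rule :: "'p signature \<Rightarrow> 'p rule \<Rightarrow> bool" where
  "wf_rule S r =
     ((\<forall>a\<in>atoms_rule r. wf_atom S a)
      \<and> (body r \<noteq> [] \<longrightarrow> \<not> is_edb S (atom_pred (head r)))
      \<and> ovars_atom (head r) \<subseteq> (\<Union>b\<in>set (body r). ovars_atom b)
      \<and> tvars_atom (head r) \<subseteq> (\<Union>b\<in>set (body r). tvars_atom b))"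

definition wf_program :: "'p signature \<Rightarrow> 'p rule set \<Rightarrow> bool" where
  "wf_program S P = (finite P \<and> (\<forall>r\<in>P. wf_rule S r))"

definition dataset :: "'p signature \<Rightarrow> 'p fact set \<Rightarrow> bool" where
  "dataset S D = (finite D \<and> (\<forall>f\<in>D. wf_fact S f \<and> is_edb S (fact_pred f)))"

fun eval_o :: "(nat \<Rightarrow> nat) \<Rightarrow> oterm \<Rightarrow> nat" where
  "eval_o \<sigma> (OConst c) = c"
| "eval_o \<sigma> (OVar v) = \<sigma> v"

fun eval_t :: "(nat \<Rightarrow> int) \<Rightarrow> tterm \<Rightarrow> int" where
  "eval_t \<theta> (TPt \<tau>) = \<tau>"
| "eval_t \<theta> (TVar v k) = \<theta> v + k"

fun ground_atom :: "(nat \<Rightarrow> nat) \<Rightarrow> (nat \<Rightarrow> int) \<Rightarrow> 'p atom \<Rightarrow> 'p fact" where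
  "ground_atom \<sigma> \<theta> (Atom p os t) = Fact p (map (eval_o \<sigma>) os) (map_option (eval_t \<theta>) t)"

definition is_model :: "'p rule set \<Rightarrow> 'p fact set \<Rightarrow> bool" where
  "is_model P M = (\<forall>r\<in>P. \<forall>\<sigma> \<theta>. (\<forall>b\<in>set (body r). ground_atom \<sigma> \<theta> b \<in> M)
                                     \<longrightarrow> ground_atom \<sigma> \<theta> (head r) \<in> M)"

definition entails :: "'p rule set \<Rightarrow> 'p fact set \<Rightarrow> 'p fact \<Rightarrow> bool" where
  "entails P D f = (\<forall>M. is_model P M \<and> D \<subseteq> M \<longrightarrow> f \<in> M)"

type_synonym 'p query = "'p \<times> 'p rule set"

definition temporal_query :: "'p signature \<Rightarrow> 'p query \<Rightarrow> bool" where
  "temporal_query S Q = (wf_program S (snd Q) \<and> fst Q \<in> preds_prog (snd Q)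
      \<and> \<not> is_edb S (fst Q) \<and> is_temporal S (fst Q))"

definition answers :: "'p query \<Rightarrow> 'p fact set \<Rightarrow> int \<Rightarrow> nat list set" where
  "answers Q D \<tau> = {os. entails (snd Q) D (Fact (fst Q) os (Some \<tau>))}"

definition history :: "'p signature \<Rightarrow> 'p fact set \<Rightarrow> int \<Rightarrow> bool" where
  "history S D \<tau>in = (dataset S D \<and> (\<forall>f\<in>D. \<forall>\<tau>. fact_time f = Some \<tau> \<longrightarrow> \<tau> \<le> \<tau>in))"

definition update :: "'p signature \<Rightarrow> 'p fact set \<Rightarrow> int \<Rightarrow> bool" where
  "update S U \<tau>in = (dataset S U \<and> (\<forall>f\<in>U. \<exists>\<tau>. fact_time f = Some \<tau> \<and> \<tau>in < \<tau>))"

definition DTP_instance :: "'p signature \<Rightarrow> 'p query \<Rightarrow> 'p fact set \<Rightarrow> int \<Rightarrow> int \<Rightarrow> bool" where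
  "DTP_instance S Q D \<tau>in \<tau>out = (temporal_query S Q \<and> history S D \<tau>in \<and> \<tau>out \<le> \<tau>in)"

definition DTP :: "'p signature \<Rightarrow> 'p query \<Rightarrow> 'p fact set \<Rightarrow> int \<Rightarrow> int \<Rightarrow> bool" where
  "DTP S Q D \<tau>in \<tau>out =
     (\<forall>U. update S U \<tau>in \<longrightarrow> answers Q D \<tau>out = answers Q (D \<union> U) \<tau>out)"

definition objs_prog :: "'p rule set \<Rightarrow> nat set" where
  "objs_prog P = {c. \<exists>a\<in>atoms_prog P. OConst c \<in> set (atom_objs a)}"

definition objs_data :: "'p fact set \<Rightarrow> nat set" where
  "objs_data D = (\<Union>f\<in>D. set (fact_objs f))"

definition fresh_obj :: "'p rule set \<Rightarrow> 'p fact set \<Rightarrow> nat" where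
  "fresh_obj P D = (SOME o'. o' \<notin> objs_prog P \<union> objs_data D)"

definition crit_dom :: "'p query \<Rightarrow> 'p fact set \<Rightarrow> nat set" where
  "crit_dom Q D = insert (fresh_obj (snd Q) D) (objs_prog (snd Q) \<union> objs_data D)"

definition depends :: "'p rule set \<Rightarrow> ('p \<times> 'p) set" where
  "depends P = {(atom_pred (head r), atom_pred b) | r b. r \<in> P \<and> b \<in> set (body r)}"

definition nonrecursive :: "'p rule set \<Rightarrow> bool" where
  "nonrecursive P = acyclic (depends P)"

definition tvars_rule :: "'p rule \<Rightarrow> nat set" where
  "tvars_rule r = (\<Union>a\<in>atoms_rule r. tvars_atom a)"

definition connected_rule :: "'p rule \<Rightarrow> bool" where
  "connected_rule r = (card (tvars_rule r) \<le> 1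
      \<and> (\<Union>b\<in>set (body r). tvars_atom b) \<subseteq> tvars_atom (head r))"

definition connected :: "'p rule set \<Rightarrow> bool" where
  "connected P = (\<forall>r\<in>P. connected_rule r)"

definition no_rigid_atoms :: "'p signature \<Rightarrow> 'p rule set \<Rightarrow> bool" where
  "no_rigid_atoms S P = (\<forall>a\<in>atoms_prog P. is_temporal S (atom_pred a))"

fun delta :: "tterm \<Rightarrow> int" where
  "delta (TPt _) = 0"
| "delta (TVar _ k) = k"

definition rule_radius :: "'p rule \<Rightarrow> int" where
  "rule_radius r =
     (if tvars_rule r = {} then 0 else
      (case atom_time (head r) of None \<Rightarrow> 0 | Some s \<Rightarrow>
        Max (insert 0 {\<bar>delta s - delta s'\<bar> | s'. \<exists>b\<in>set (body r). atom_time b = Some s'})))"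

definition prog_radius :: "'p rule set \<Rightarrow> int" where
  "prog_radius P = int (card P) * Max (insert 0 (rule_radius ` P))"

definition times_prog :: "'p rule set \<Rightarrow> int set" where
  "times_prog P = {\<tau>. \<exists>a\<in>atoms_prog P. atom_time a = Some (TPt \<tau>)}"

definition tau0 :: "'p rule set \<Rightarrow> int \<Rightarrow> int" where
  "tau0 P \<tau>out = Max (insert \<tau>out (times_prog P))"

definition critical :: "'p query \<Rightarrow> int \<Rightarrow> int \<Rightarrow> int \<Rightarrow> bool" where
  "critical Q \<tau>in \<tau>out \<tau> = (\<tau>in < \<tau> \<and> \<tau> \<le> tau0 (snd Q) \<tau>out + prog_radius (snd Q))"

definition bounded_crit_update ::
  "'p signature \<Rightarrow> 'p query \<Rightarrow> 'p fact set \<Rightarrow> int \<Rightarrow> int \<Rightarrow> 'p fact set" where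
  "bounded_crit_update S Q D \<tau>in \<tau>out =
     {Fact p os (Some \<tau>) | p os \<tau> n.
        p \<in> preds_prog (snd Q) \<and> is_edb S p \<and> kind S p = Temporal n
        \<and> length os = n \<and> set os \<subseteq> crit_dom Q D \<and> critical Q \<tau>in \<tau>out \<tau>}"

end

theory Submission
  imports Defs
begin


fun hmap :: "(nat \<Rightarrow> nat) \<Rightarrow> 'p fact \<Rightarrow> 'p fact" where
  "hmap h (Fact p os t) = Fact p (map h os) t"

lemma ground_hmap:
  assumes "\<forall>c. OConst c \<in> set (atom_objs a) \<longrightarrow> h c = c"
  shows "hmap h (ground_atom \<sigma> \<theta> a) = ground_atom (h \<circ> \<sigma>) \<theta> a"
proof (cases a)
  case (Atom p os t)
  have "map h (map (eval_o \<sigma>) os) = map (eval_o (h \<circ> \<sigma>)) os"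
  proof -
    have "h (eval_o \<sigma> x) = eval_o (h \<circ> \<sigma>) x" if "x \<in> set os" for x
      using assms Atom that by (cases x) auto
    then show ?thesis by simp
  qed
  then show ?thesis using Atom by simp
qed

lemma atoms_prog_I: "r \<in> P \<Longrightarrow> a \<in> atoms_rule r \<Longrightarrow> a \<in> atoms_prog P"
  unfolding atoms_prog_def by blast

lemma pullback_model:
  assumes "is_model P M"
    and "\<forall>a\<in>atoms_prog P. \<forall>c. OConst c \<in> set (atom_objs a) \<longrightarrow> h c = c"
  shows "is_model P {f. hmap h f \<in> M}"
  unfolding is_model_def
proof (intro ballI allI impI)
  fix r \<sigma> \<theta> assume r: "r \<in> P" and b: "\<forall>b\<in>set (body r). ground_atom \<sigma> \<theta> b \<in> {f. hmap h f \<in> M}"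
  have fix_: "hmap h (ground_atom \<sigma> \<theta> a) = ground_atom (h \<circ> \<sigma>) \<theta> a" if "a \<in> atoms_rule r" for a
    using ground_hmap assms(2) atoms_prog_I[OF r that] by blast
  have "\<forall>b\<in>set (body r). ground_atom (h \<circ> \<sigma>) \<theta> b \<in> M"
    using b fix_ unfolding atoms_rule_def by auto
  then have "ground_atom (h \<circ> \<sigma>) \<theta> (head r) \<in> M"
    using assms(1) r unfolding is_model_def by blast
  then show "ground_atom \<sigma> \<theta> (head r) \<in> {f. hmap h f \<in> M}"
    using fix_[of "head r"] unfolding atoms_rule_def by auto
qed

lemma rank_exists:
  assumes "finite P" "acyclic (depends P)"
  shows "\<exists>d::'p \<Rightarrow> nat. (\<forall>r\<in>P. \<forall>b\<in>set (body r). d (atom_pred (head r)) < d (atom_pred b))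
            \<and> (\<forall>p. d p \<le> card P)"
proof -
  define A where "A q = {r\<in>P. (atom_pred (head r), q) \<in> (depends P)\<^sup>+}" for q
  define d where "d q = card (A q)" for q
  have "d (atom_pred (head r)) < d (atom_pred b)" if r: "r \<in> P" and b: "b \<in> set (body r)" for r b
  proof -
    let ?p = "atom_pred (head r)" and ?q = "atom_pred b"
    have e: "(?p, ?q) \<in> depends P" using r b unfolding depends_def by blast
    have "A ?p \<subseteq> A ?q" unfolding A_def using e by (auto intro: trancl_into_trancl)
    moreover have "r \<in> A ?q" unfolding A_def using e r by auto
    moreover have "r \<notin> A ?p" using assms(2) unfolding A_def acyclic_def by auto
    ultimately have "A ?p \<subset> A ?q" by blast
    moreover have "finite (A ?q)" unfolding A_def using assms(1) by auto
    ultimately show ?thesis unfolding d_def by (rule psubset_card_mono[rotated])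
  qed
  moreover have "d p \<le> card P" for p unfolding d_def A_def
    by (rule card_mono[OF assms(1)]) auto
  ultimately show ?thesis by blast
qed

lemma temporal_atom_time:
  assumes "wf_program S P" "no_rigid_atoms S P" "r \<in> P" "a \<in> atoms_rule r"
  shows "\<exists>q os s. a = Atom q os (Some s)"
proof -
  have "wf_atom S a" using assms(1,3,4) unfolding wf_program_def wf_rule_def by blast
  moreover have "is_temporal S (atom_pred a)"
    using assms(2) atoms_prog_I[OF assms(3,4)] unfolding no_rigid_atoms_def by blast
  ultimately show ?thesis
    by (cases a) (auto simp: is_temporal_def)
qed

lemma radius_ge:
  assumes "v \<in> tvars_rule r" "atom_time (head r) = Some s" "b \<in> set (body r)"
    "atom_time b = Some s'"
  shows "\<bar>delta s - delta s'\<bar> \<le> rule_radius r"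
proof -
  let ?X = "{\<bar>delta s - delta s'\<bar> | s'. \<exists>b\<in>set (body r). atom_time b = Some s'}"
  have "?X \<subseteq> (\<lambda>b. case atom_time b of Some s' \<Rightarrow> \<bar>delta s - delta s'\<bar>) ` set (body r)"
    by force
  then have fin: "finite ?X" by (rule finite_subset) simp
  have "\<bar>delta s - delta s'\<bar> \<in> insert 0 ?X" using assms(3,4) by blast
  then have "\<bar>delta s - delta s'\<bar> \<le> Max (insert 0 ?X)" using fin by simp
  then show ?thesis using assms(1,2) unfolding rule_radius_def by auto
qed

lemma locality:
  assumes wf: "wf_program S P" and nr: "no_rigid_atoms S P" and con: "connected P"
    and M: "is_model P M"
    and R: "\<forall>r\<in>P. rule_radius r \<le> R"
    and W: "\<forall>r\<in>P. \<forall>b\<in>set (body r). w (atom_pred (head r)) + R \<le> w (atom_pred b)"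
    and T: "\<forall>\<tau>\<in>times_prog P. \<forall>p. \<tau> \<le> w p"
  shows "is_model P (M \<union> {f. fact_pred f \<notin> preds_prog P}
           \<union> {f. \<exists>\<tau>. fact_time f = Some \<tau> \<and> w (fact_pred f) < \<tau>})" (is "is_model P ?M")
  unfolding is_model_def
proof (intro ballI allI impI)
  fix r \<sigma> \<theta> assume r: "r \<in> P" and bd: "\<forall>b\<in>set (body r). ground_atom \<sigma> \<theta> b \<in> ?M"
  obtain p os s where hd: "head r = Atom p os (Some s)"
    using temporal_atom_time[OF wf nr r, of "head r"] unfolding atoms_rule_def by blast
  show "ground_atom \<sigma> \<theta> (head r) \<in> ?M"
  proof (cases "w p < eval_t \<theta> s")
    case True then show ?thesis using hd by simp
  next
    case False
    have "ground_atom \<sigma> \<theta> b \<in> M" if b: "b \<in> set (body r)" for b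
    proof -
      have bar: "b \<in> atoms_rule r" using b unfolding atoms_rule_def by simp
      obtain q os' s' where bq: "b = Atom q os' (Some s')"
        using temporal_atom_time[OF wf nr r bar] by blast
      have qp: "q \<in> preds_prog P"
        using atoms_prog_I[OF r bar] bq unfolding preds_prog_def by force
      have le: "eval_t \<theta> s' \<le> w q"
      proof (cases s')
        case (TPt \<tau>)
        then have "\<tau> \<in> times_prog P"
          using atoms_prog_I[OF r bar] bq unfolding times_prog_def by force
        then show ?thesis using T TPt by simp
      next
        case (TVar v k')
        have "v \<in> tvars_atom b" using bq TVar by (simp add: tvars_atom_def)
        then have "v \<in> tvars_atom (head r)"
          using con r b unfolding connected_def connected_rule_def by blast
        then obtain k where sk: "s = TVar v k" using hd
          by (cases s) (auto simp: tvars_atom_def)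
        have vr: "v \<in> tvars_rule r" using \<open>v \<in> tvars_atom b\<close> bar
          unfolding tvars_rule_def by blast
        have "\<bar>delta s - delta s'\<bar> \<le> rule_radius r"
          using radius_ge[OF vr _ b] hd bq by simp
        then have "k' - k \<le> R" using R r sk TVar by force
        moreover have "w p + R \<le> w q" using W r b hd bq by force
        ultimately show ?thesis using False sk TVar by simp
      qed
      have "ground_atom \<sigma> \<theta> b \<in> ?M" using bd b by blast
      then show ?thesis using qp le bq by auto
    qed
    then show ?thesis using M r unfolding is_model_def by blast
  qed
qed

lemma finite_atoms_prog: "finite P \<Longrightarrow> finite (atoms_prog P)"
  unfolding atoms_prog_def atoms_rule_def by auto

lemma finite_objs_prog: "finite P \<Longrightarrow> finite (objs_prog P)"
proof -
  assume "finite P"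
  then have "objs_prog P \<subseteq> (\<Union>a\<in>atoms_prog P. {c. OConst c \<in> set (atom_objs a)})"
    unfolding objs_prog_def by auto
  moreover have "finite {c. OConst c \<in> set (atom_objs a)}" for a
  proof -
    have "{c. OConst c \<in> set (atom_objs a)} \<subseteq> (\<lambda>x. case x of OConst c \<Rightarrow> c) ` set (atom_objs a)"
      by force
    then show ?thesis by (rule finite_subset) simp
  qed
  moreover have "finite (\<Union>a\<in>atoms_prog P. {c. OConst c \<in> set (atom_objs a)})"
    using finite_atoms_prog[OF \<open>finite P\<close>] calculation(2) by (intro finite_UN_I) auto
  ultimately show ?thesis using finite_subset by blast
qed

lemma finite_times_prog: "finite P \<Longrightarrow> finite (times_prog P)"
proof -
  assume "finite P"
  have "times_prog P \<subseteq> (\<lambda>a. case atom_time a of Some (TPt \<tau>) \<Rightarrow> \<tau>) ` atoms_prog P"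
    unfolding times_prog_def by force
  then show ?thesis using finite_atoms_prog[OF \<open>finite P\<close>] by (meson finite_imageI finite_subset)
qed

lemma finite_objs_data: "finite D \<Longrightarrow> finite (objs_data D)"
  unfolding objs_data_def by auto

lemma finite_preds_prog: "finite P \<Longrightarrow> finite (preds_prog P)"
  unfolding preds_prog_def using finite_atoms_prog by auto

lemma entails_mono: "entails P D f \<Longrightarrow> D \<subseteq> D' \<Longrightarrow> entails P D' f"
  unfolding entails_def by blast



theorem lemma5:
  fixes S :: "'p signature" and Q :: "'p query" and D :: "'p fact set"
    and \<tau>in \<tau>out :: int
  assumes "DTP_instance S Q D \<tau>in \<tau>out"
    and "nonrecursive (snd Q)"
    and "connected (snd Q)"
    and "no_rigid_atoms S (snd Q)"
  shows "DTP S Q D \<tau>in \<tau>out \<longleftrightarrow>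
    (\<forall>os. set os \<subseteq> crit_dom Q D \<longrightarrow>
       os \<in> answers Q (D \<union> bounded_crit_update S Q D \<tau>in \<tau>out) \<tau>out \<longrightarrow>
       os \<in> answers Q D \<tau>out)"
proof -
  define P where "P = snd Q"
  define PQ where "PQ = fst Q"
  have Qeq: "Q = (PQ, P)" unfolding P_def PQ_def by simp
  have wf: "wf_program S P" and finP: "finite P" and PQp: "PQ \<in> preds_prog P"
    using assms(1) unfolding DTP_instance_def temporal_query_def wf_program_def P_def PQ_def
    by auto
  have hist: "history S D \<tau>in" using assms(1) unfolding DTP_instance_def by auto
  then have finD: "finite D" unfolding history_def dataset_def by auto
  define C0 where "C0 = objs_prog P \<union> objs_data D"
  define oI where "oI = fresh_obj P D"
  have finC0: "finite C0" unfolding C0_def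
    using finite_objs_prog[OF finP] finite_objs_data[OF finD] by simp
  have oI: "oI \<notin> C0"
  proof -
    have "\<exists>x. x \<notin> C0" using finC0 ex_new_if_finite[OF infinite_UNIV_nat] by blast
    then show ?thesis unfolding oI_def fresh_obj_def C0_def by (rule someI_ex)
  qed
  have cd: "crit_dom Q D = insert oI C0"
    unfolding crit_dom_def oI_def C0_def P_def by simp
  define B where "B = bounded_crit_update S Q D \<tau>in \<tau>out"
  define bound where "bound = tau0 P \<tau>out + prog_radius P"
  have Bdef: "B = {Fact p os (Some \<tau>) | p os \<tau> n.
        p \<in> preds_prog P \<and> is_edb S p \<and> kind S p = Temporal n
        \<and> length os = n \<and> set os \<subseteq> insert oI C0 \<and> \<tau>in < \<tau> \<and> \<tau> \<le> bound}"
    unfolding B_def bounded_crit_update_def cd critical_def bound_def P_def by simp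
  have updB: "update S B \<tau>in"
  proof -
    define N where "N p = (case kind S p of Temporal n \<Rightarrow> n | Rigid n \<Rightarrow> n)" for p
    have "B \<subseteq> (\<lambda>(p, os, \<tau>). Fact p os (Some \<tau>)) `
        (SIGMA p:preds_prog P. {os. set os \<subseteq> insert oI C0 \<and> length os \<le> N p} \<times> {\<tau>in<..bound})"
    proof
      fix x assume "x \<in> B"
      then obtain p os \<tau> n where x: "x = Fact p os (Some \<tau>)" "p \<in> preds_prog P"
        "kind S p = Temporal n" "length os = n" "set os \<subseteq> insert oI C0" "\<tau>in < \<tau>" "\<tau> \<le> bound"
        unfolding Bdef by blast
      then have "(p, os, \<tau>) \<in> (SIGMA p:preds_prog P. {os. set os \<subseteq> insert oI C0 \<and> length os \<le> N p} \<times> {\<tau>in<..bound})"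
        unfolding N_def by simp
      then show "x \<in> (\<lambda>(p, os, \<tau>). Fact p os (Some \<tau>)) `
        (SIGMA p:preds_prog P. {os. set os \<subseteq> insert oI C0 \<and> length os \<le> N p} \<times> {\<tau>in<..bound})"
        by (rule rev_image_eqI) (simp add: x(1))
    qed
    moreover have "finite (SIGMA p:preds_prog P. {os. set os \<subseteq> insert oI C0 \<and> length os \<le> N p} \<times> {\<tau>in<..bound})"
      using finite_preds_prog[OF finP] finC0
      by (intro finite_SigmaI finite_cartesian_product finite_lists_length_le) auto
    ultimately have "finite B" using finite_subset by blast
    then show ?thesis unfolding update_def dataset_def Bdef by auto
  qed
  show ?thesis
  proof
    assume "DTP S Q D \<tau>in \<tau>out"
    then have "answers Q D \<tau>out = answers Q (D \<union> B) \<tau>out"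
      using updB unfolding DTP_def by blast
    then show "\<forall>os. set os \<subseteq> crit_dom Q D \<longrightarrow>
       os \<in> answers Q (D \<union> bounded_crit_update S Q D \<tau>in \<tau>out) \<tau>out \<longrightarrow>
       os \<in> answers Q D \<tau>out" unfolding B_def by blast
  next
    assume cond: "\<forall>os. set os \<subseteq> crit_dom Q D \<longrightarrow>
       os \<in> answers Q (D \<union> bounded_crit_update S Q D \<tau>in \<tau>out) \<tau>out \<longrightarrow>
       os \<in> answers Q D \<tau>out"
    obtain d :: "'p \<Rightarrow> nat" where
      d1: "\<forall>r\<in>P. \<forall>b\<in>set (body r). d (atom_pred (head r)) < d (atom_pred b)"
      and d2: "\<forall>p. d p \<le> card P"
      using rank_exists[OF finP] assms(2) unfolding nonrecursive_def P_def by blast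
    define R where "R = Max (insert 0 (rule_radius ` P))"
    have R0: "0 \<le> R" unfolding R_def using finP by simp
    have Rr: "\<forall>r\<in>P. rule_radius r \<le> R" unfolding R_def using finP by simp
    define T where "T = tau0 P \<tau>out"
    have Tt: "\<forall>\<tau>\<in>times_prog P. \<tau> \<le> T" and Tout: "\<tau>out \<le> T"
      unfolding T_def tau0_def using finite_times_prog[OF finP] by auto
    define w where "w p = T + R * int (d p)" for p
    have W: "\<forall>r\<in>P. \<forall>b\<in>set (body r). w (atom_pred (head r)) + R \<le> w (atom_pred b)"
    proof (intro ballI)
      fix r b assume "r \<in> P" "b \<in> set (body r)"
      then have "int (d (atom_pred (head r))) + 1 \<le> int (d (atom_pred b))" using d1 by force
      then have "R * (int (d (atom_pred (head r))) + 1) \<le> R * int (d (atom_pred b))"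
        using R0 by (rule mult_left_mono)
      then show "w (atom_pred (head r)) + R \<le> w (atom_pred b)" unfolding w_def
        by (simp add: algebra_simps)
    qed
    have wT: "T \<le> w p" for p unfolding w_def using R0 by simp
    have wb: "w p \<le> bound" for p
    proof -
      have "R * int (d p) \<le> R * int (card P)" using R0 d2 by (simp add: mult_left_mono)
      then show ?thesis unfolding w_def bound_def prog_radius_def T_def R_def
        by (simp add: mult.commute)
    qed
    have loc: "is_model P (M \<union> {f. fact_pred f \<notin> preds_prog P}
           \<union> {f. \<exists>\<tau>. fact_time f = Some \<tau> \<and> w (fact_pred f) < \<tau>})" if "is_model P M" for M
    proof -
      have "\<forall>\<tau>\<in>times_prog P. \<forall>p. \<tau> \<le> w p" using Tt wT order_trans by blast
      then show ?thesis using locality[OF wf _ _ that Rr W] assms(3,4) unfolding P_def by blast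
    qed
    show "DTP S Q D \<tau>in \<tau>out"
      unfolding DTP_def
    proof (intro allI impI)
      fix U assume U: "update S U \<tau>in"
      show "answers Q D \<tau>out = answers Q (D \<union> U) \<tau>out"
      proof
        show "answers Q D \<tau>out \<subseteq> answers Q (D \<union> U) \<tau>out"
          unfolding answers_def using entails_mono by blast
      next
        show "answers Q (D \<union> U) \<tau>out \<subseteq> answers Q D \<tau>out"
        proof
          fix os assume os: "os \<in> answers Q (D \<union> U) \<tau>out"
          define h where "h x = (if x \<in> C0 then x else oI)" for x
          have hC: "h x \<in> insert oI C0" for x unfolding h_def by auto
          have hfix: "\<forall>a\<in>atoms_prog P. \<forall>c. OConst c \<in> set (atom_objs a) \<longrightarrow> h c = c"
            unfolding h_def C0_def objs_prog_def by auto
          have "entails P (D \<union> B) (Fact PQ (map h os) (Some \<tau>out))"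
            unfolding entails_def
          proof (intro allI impI)
            fix M assume M: "is_model P M \<and> D \<union> B \<subseteq> M"
            define M' where "M' = M \<union> {f. fact_pred f \<notin> preds_prog P}
              \<union> {f. \<exists>\<tau>. fact_time f = Some \<tau> \<and> w (fact_pred f) < \<tau>}"
            have mM': "is_model P M'" unfolding M'_def using loc M by blast
            have mpb: "is_model P {f. hmap h f \<in> M'}"
              using pullback_model[OF mM' hfix] .
            have "D \<union> U \<subseteq> {f. hmap h f \<in> M'}"
            proof
              fix f assume f: "f \<in> D \<union> U"
              obtain p xs t where fe: "f = Fact p xs t" by (cases f)
              show "f \<in> {f. hmap h f \<in> M'}"
              proof (cases "f \<in> D")
                case True
                then have "set xs \<subseteq> C0" unfolding C0_def objs_data_def using fe by force
                then have "map h xs = xs" unfolding h_def by (induct xs) auto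
                then show ?thesis using True fe M unfolding M'_def by auto
              next
                case False
                then have fU: "f \<in> U" using f by blast
                then obtain \<tau> where t: "t = Some \<tau>" "\<tau>in < \<tau>" using U fe unfolding update_def by auto
                have wff: "wf_fact S f" and edb: "is_edb S p"
                  using U fU fe unfolding update_def dataset_def by auto
                obtain n where kn: "kind S p = Temporal n" "length xs = n"
                  using wff fe t by (cases "kind S p") auto
                show ?thesis
                proof (cases "p \<in> preds_prog P \<and> \<tau> \<le> w p")
                  case True
                  have "\<tau> \<le> bound" using True wb[of p] by linarith
                  moreover have "set (map h xs) \<subseteq> insert oI C0" using hC by auto
                  ultimately have "hmap h f \<in> B" unfolding Bdef using fe t kn edb True
                    by auto
                  then show ?thesis using M unfolding M'_def by auto
                next
                  case False
                  then show ?thesis unfolding M'_def using fe t by auto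
                qed
              qed
            qed
            then have "Fact PQ os (Some \<tau>out) \<in> {f. hmap h f \<in> M'}"
              using os mpb unfolding answers_def entails_def Qeq by auto
            then have "Fact PQ (map h os) (Some \<tau>out) \<in> M'" by simp
            then show "Fact PQ (map h os) (Some \<tau>out) \<in> M"
              unfolding M'_def using PQp Tout wT[of PQ] by auto
          qed
          then have "map h os \<in> answers Q (D \<union> B) \<tau>out"
            unfolding answers_def Qeq by simp
          moreover have "set (map h os) \<subseteq> crit_dom Q D" using hC cd by auto
          ultimately have hos: "map h os \<in> answers Q D \<tau>out" using cond unfolding B_def by blast
          define M0 :: "'p fact set" where "M0 = {f. set (fact_objs f) \<subseteq> C0}"
          have "is_model P M0" unfolding is_model_def M0_def
          proof (intro ballI allI impI)
            fix r \<sigma> \<theta> assume r: "r \<in> P"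
              and bd: "\<forall>b\<in>set (body r). ground_atom \<sigma> \<theta> b \<in> {f. set (fact_objs f) \<subseteq> C0}"
            obtain p xs t where hd: "head r = Atom p xs t" by (cases "head r")
            have "eval_o \<sigma> x \<in> C0" if x: "x \<in> set xs" for x
            proof (cases x)
              case (OConst c)
              then have "c \<in> objs_prog P" unfolding objs_prog_def
                using atoms_prog_I[OF r, of "head r"] hd x by (force simp: atoms_rule_def)
              then show ?thesis using OConst unfolding C0_def by simp
            next
              case (OVar v)
              then have "v \<in> ovars_atom (head r)" using hd x by (simp add: ovars_atom_def)
              then obtain b where b: "b \<in> set (body r)" "v \<in> ovars_atom b"
                using wf r unfolding wf_program_def wf_rule_def by blast
              obtain q ys u where be: "b = Atom q ys u" by (cases b)
              have "OVar v \<in> set ys" using b be by (simp add: ovars_atom_def)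
              moreover have "set (map (eval_o \<sigma>) ys) \<subseteq> C0"
              proof -
                have "set (fact_objs (ground_atom \<sigma> \<theta> b)) \<subseteq> C0" using bd b(1) by blast
                then show ?thesis using be by simp
              qed
              ultimately show ?thesis using OVar by force
            qed
            then show "ground_atom \<sigma> \<theta> (head r) \<in> {f. set (fact_objs f) \<subseteq> C0}"
              using hd by auto
          qed
          moreover have "D \<subseteq> M0" unfolding M0_def C0_def objs_data_def by auto
          ultimately have "Fact PQ (map h os) (Some \<tau>out) \<in> M0"
            using hos unfolding answers_def entails_def Qeq by auto
          then have "set (map h os) \<subseteq> C0" unfolding M0_def by simp
          then have "set os \<subseteq> C0" using oI unfolding h_def by (auto split: if_splits)
          then have "map h os = os" unfolding h_def by (induct os) auto
          then show "os \<in> answers Q D \<tau>out" using hos by simp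
        qed
      qed
    qed
  qed
qed

end
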